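(* Let $H$ be a separable infinite-dimensional Hilbert space and let $\Phi:\mathcal{T}(H)\to\mathcal{T}(H)$ be the channel $\Phi(X)=\sum_{k=1}^\infty u_kv_k^*Xv_ku_k^*=\sum_{k=1}^\infty E_kXE_k^*$, where $E_k=u_kv_k^*$, $u_k,v_k\in H$, $\|u_k\|=1$ for all $k$, and $\sum_{k=1}^\infty v_kv_k^*=I_H$. Let $\mathcal{M}_\Phi=\{A\in\mathcal{T}(H):\Phi(AX)=\Phi(A)\Phi(X)\text{ and }\Phi(XA)=\Phi(X)\Phi(A)\text{ for all }X\in\mathcal{T}(H)\}$ be its multiplicative domain. If an orthogonal projection $P$ lies in $\mathcal{M}_\Phi$, then every $v_k$ is an eigenvector of $P$. Moreover, any two orthogonal projections in $\mathcal{M}_\Phi$ commute.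
   Context: $\mathcal{T}(H)$ denotes the trace-class operators on $H$. (Channels of the given form are exactly the strongly entanglement breaking channels on $\mathcal{T}(H)$.) *)

theory Defs
  imports "HOL-Analysis.Analysis"
begin

text \<open>The distribution has no complex Hilbert spaces, so we introduce the standard
axioms: a complex vector space (whose real scalar multiplication is the restriction
of the complex one) with a sesquilinear inner product, conjugate-linear in the first
argument and linear in the second, inducing the norm.\<close>

class complex_inner = real_normed_vector +
  fixes scaleC :: "complex \<Rightarrow> 'a \<Rightarrow> 'a" (infixr \<open>*\<^sub>C\<close> 75)
    and cinner :: "'a \<Rightarrow> 'a \<Rightarrow> complex"
  assumes scaleC_add_right: "a *\<^sub>C (x + y) = a *\<^sub>C x + a *\<^sub>C y"
    and scaleC_add_left: "(a + b) *\<^sub>C x = a *\<^sub>C x + b *\<^sub>C x"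
    and scaleC_scaleC: "a *\<^sub>C (b *\<^sub>C x) = (a * b) *\<^sub>C x"
    and scaleC_one: "1 *\<^sub>C x = x"
    and scaleR_scaleC: "scaleR r x = complex_of_real r *\<^sub>C x"
    and cinner_commute: "cinner x y = cnj (cinner y x)"
    and cinner_add_right: "cinner x (y + z) = cinner x y + cinner x z"
    and cinner_scaleC_right: "cinner x (a *\<^sub>C y) = a * cinner x y"
    and cinner_self_nonneg: "Im (cinner x x) = 0 \<and> Re (cinner x x) \<ge> 0"
    and norm_eq_sqrt_cinner: "norm x = sqrt (Re (cinner x x))"

class chilbert_space = complex_inner + complete_space

definition separable_type :: "'a::topological_space itself \<Rightarrow> bool" where
  "separable_type _ \<longleftrightarrow> (\<exists>D::'a set. countable D \<and> closure D = UNIV)"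

definition cindependent :: "'a::complex_inner set \<Rightarrow> bool" where
  "cindependent S \<longleftrightarrow> (\<forall>T c. finite T \<and> T \<subseteq> S \<and> (\<Sum>x\<in>T. c x *\<^sub>C x) = 0
      \<longrightarrow> (\<forall>x\<in>T. c x = 0))"

definition infinite_dimensional :: "'a::complex_inner itself \<Rightarrow> bool" where
  "infinite_dimensional _ \<longleftrightarrow> (\<exists>S::'a set. infinite S \<and> cindependent S)"

definition clinear :: "('a::complex_inner \<Rightarrow> 'b::complex_inner) \<Rightarrow> bool" where
  "clinear f \<longleftrightarrow> (\<forall>x y. f (x + y) = f x + f y) \<and> (\<forall>a x. f (a *\<^sub>C x) = a *\<^sub>C f x)"

text \<open>Rank-one operator u v^*, i.e. x |-> <v,x> u.\<close>
definition rank1 :: "'a::complex_inner \<Rightarrow> 'a \<Rightarrow> 'a \<Rightarrow> 'a" where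
  "rank1 u v = (\<lambda>x. cinner v x *\<^sub>C u)"

text \<open>Trace-class operators, defined as nuclear operators:
  T x = Sum_n <b_n,x> a_n with Sum_n ||a_n|| ||b_n|| < oo
  (on a Hilbert space these are exactly the trace-class operators).\<close>
definition trace_class :: "('a::complex_inner \<Rightarrow> 'a) \<Rightarrow> bool" where
  "trace_class T \<longleftrightarrow> (\<exists>a b :: nat \<Rightarrow> 'a.
      summable (\<lambda>n. norm (a n) * norm (b n)) \<and>
      (\<forall>x. (\<lambda>n. cinner (b n) x *\<^sub>C a n) sums T x))"

definition orth_proj :: "('a::complex_inner \<Rightarrow> 'a) \<Rightarrow> bool" where
  "orth_proj P \<longleftrightarrow> clinear P \<and> P \<circ> P = P \<and> (\<forall>x y. cinner (P x) y = cinner x (P y))"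

definition is_eigenvector :: "('a::complex_inner \<Rightarrow> 'a) \<Rightarrow> 'a \<Rightarrow> bool" where
  "is_eigenvector T x \<longleftrightarrow> x \<noteq> 0 \<and> (\<exists>c. T x = c *\<^sub>C x)"

text \<open>Phi(X) = Sum_k E_k X E_k^* with E_k = u_k v_k^*, the series taken
  pointwise (it converges in trace norm for trace-class X, hence also pointwise).\<close>
definition channel :: "(nat \<Rightarrow> 'a::complex_inner) \<Rightarrow> (nat \<Rightarrow> 'a) \<Rightarrow> ('a \<Rightarrow> 'a) \<Rightarrow> ('a \<Rightarrow> 'a)" where
  "channel u v X = (\<lambda>x. \<Sum>k. (rank1 (u k) (v k) \<circ> X \<circ> rank1 (v k) (u k)) x)"

definition mult_domain :: "(('a::complex_inner \<Rightarrow> 'a) \<Rightarrow> ('a \<Rightarrow> 'a)) \<Rightarrow> ('a \<Rightarrow> 'a) set" where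
  "mult_domain \<Phi> = {A. trace_class A \<and> (\<forall>X. trace_class X \<longrightarrow>
      \<Phi> (A \<circ> X) = \<Phi> A \<circ> \<Phi> X \<and> \<Phi> (X \<circ> A) = \<Phi> X \<circ> \<Phi> A)}"

end

theory Submission imports Defs begin

lemma cinner_add_left: "cinner (x + y) (z::'a::complex_inner) = cinner x z + cinner y z"
  by (metis cinner_commute cinner_add_right complex_cnj_add)
lemma cinner_scaleC_left: "cinner (a *\<^sub>C x) (y::'a::complex_inner) = cnj a * cinner x y"
  by (metis cinner_commute cinner_scaleC_right complex_cnj_mult complex_cnj_cnj)
lemma cinner_zero_right[simp]: "cinner (x::'a::complex_inner) 0 = 0"
  using cinner_add_right[of x 0 0] by simp
lemma cinner_zero_left[simp]: "cinner 0 (x::'a::complex_inner) = 0"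
  by (metis cinner_commute cinner_zero_right complex_cnj_zero)
lemma scaleC_zero_left[simp]: "0 *\<^sub>C (x::'a::complex_inner) = 0"
  using scaleC_add_left[of 0 0 x] by simp
lemma scaleC_zero_right[simp]: "a *\<^sub>C (0::'a::complex_inner) = 0"
  using scaleC_add_right[of a 0 0] by simp
lemma minus_scaleC: "- (x::'a::complex_inner) = (-1) *\<^sub>C x"
  using scaleR_scaleC[of "-1" x] by simp
lemma scaleC_minus_right: "a *\<^sub>C (- (x::'a::complex_inner)) = - (a *\<^sub>C x)"
  by (metis minus_scaleC scaleC_scaleC mult.commute)
lemma scaleC_diff_right: "a *\<^sub>C ((x::'a::complex_inner) - y) = a *\<^sub>C x - a *\<^sub>C y"
  by (metis diff_conv_add_uminus scaleC_add_right scaleC_minus_right)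
lemma cinner_minus_right: "cinner x (- (y::'a::complex_inner)) = - cinner x y"
  by (metis minus_scaleC cinner_scaleC_right mult_minus1)
lemma cinner_diff_right: "cinner x ((y::'a::complex_inner) - z) = cinner x y - cinner x z"
  by (metis diff_conv_add_uminus cinner_add_right cinner_minus_right)
lemma cinner_diff_left: "cinner ((y::'a::complex_inner) - z) x = cinner y x - cinner z x"
  by (metis cinner_commute cinner_diff_right complex_cnj_diff)
lemma cinner_self: "cinner (x::'a::complex_inner) x = complex_of_real ((norm x)^2)"
proof -
  have "Im (cinner x x) = 0" "Re (cinner x x) \<ge> 0" using cinner_self_nonneg by auto
  moreover have "(norm x)^2 = Re (cinner x x)" using norm_eq_sqrt_cinner[of x] calculation by simp
  ultimately show ?thesis by (simp add: complex_eq_iff)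
qed
lemma cinner_self_eq_0: "cinner (x::'a::complex_inner) x = 0 \<longleftrightarrow> x = 0"
  by (simp add: cinner_self)
lemma norm_scaleC: "norm (a *\<^sub>C (x::'a::complex_inner)) = cmod a * norm x"
proof -
  have "complex_of_real ((norm (a *\<^sub>C x))^2) = cnj a * a * complex_of_real ((norm x)^2)"
    by (metis cinner_self cinner_scaleC_left cinner_scaleC_right mult.assoc)
  also have "cnj a * a = complex_of_real ((cmod a)^2)" by (metis complex_norm_square mult.commute of_real_power)
  finally have "(norm (a *\<^sub>C x))^2 = (cmod a * norm x)^2"
    by (metis of_real_eq_iff of_real_mult power_mult_distrib)
  then show ?thesis by (simp add: power2_eq_iff_nonneg)
qed

lemma cauchy_schwarz: "cmod (cinner x y) \<le> norm x * norm (y::'a::complex_inner)"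
proof (cases "y = 0")
  case True then show ?thesis by simp
next
  case False
  define p where "p = cinner y x"
  define R where "R = (norm y)^2"
  have R: "R > 0" using False by (simp add: R_def)
  define s where "s = - p / complex_of_real R"
  have xy: "cinner x y = cnj p" by (simp add: p_def cinner_commute[of x y])
  have e: "cinner (x + s *\<^sub>C y) (x + s *\<^sub>C y) = cinner x x + s * cnj p + cnj s * p + cnj s * s * complex_of_real R"
    by (simp add: cinner_add_left cinner_add_right cinner_scaleC_left cinner_scaleC_right xy p_def[symmetric] R_def cinner_self[of y] algebra_simps)
  also have "\<dots> = cinner x x - complex_of_real ((cmod p)^2 / R)"
    using R by (simp add: s_def field_simps complex_norm_square) (simp add: algebra_simps complex_norm_square[symmetric])
  finally have "0 \<le> (norm x)^2 - (cmod p)^2 / R"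
    by (metis Re_complex_of_real cinner_self of_real_diff norm_ge_zero zero_le_power2)
  then have "(cmod p)^2 \<le> (norm x)^2 * (norm y)^2" using R by (simp add: R_def field_simps)
  then have "(cmod p)^2 \<le> (norm x * norm y)^2" by (simp add: power_mult_distrib)
  then have "cmod p \<le> norm x * norm y" by (rule power2_le_imp_le) simp
  then show ?thesis by (simp add: xy)
qed

lemma bounded_linear_cinner_right: "bounded_linear (cinner (x::'a::complex_inner))"
proof (rule bounded_linear_intro[where K="norm x"])
  fix y z :: 'a show "cinner x (y + z) = cinner x y + cinner x z" by (rule cinner_add_right)
next
  fix r and y :: 'a show "cinner x (r *\<^sub>R y) = r *\<^sub>R cinner x y"
    by (simp add: scaleR_scaleC cinner_scaleC_right scaleR_conv_of_real)
next
  fix y :: 'a show "norm (cinner x y) \<le> norm y * norm x"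
    using cauchy_schwarz[of x y] by (simp add: mult.commute)
qed

lemma sums_cinner: "f sums s \<Longrightarrow> (\<lambda>n. cinner (x::'a::complex_inner) (f n)) sums cinner x s"
  by (rule bounded_linear.sums[OF bounded_linear_cinner_right])

context chilbert_space begin
subclass banach ..
end

lemma clinear_add: "clinear P \<Longrightarrow> P (x + y) = P x + P y" by (simp add: clinear_def)
lemma clinear_scaleC: "clinear P \<Longrightarrow> P (a *\<^sub>C x) = a *\<^sub>C P x" by (simp add: clinear_def)
lemma clinear_zero: "clinear (P::'a::complex_inner\<Rightarrow>'b::complex_inner) \<Longrightarrow> P 0 = 0"
  using clinear_scaleC[of P 0 0] by simp
lemma clinear_minus: "clinear (P::'a::complex_inner\<Rightarrow>'b::complex_inner) \<Longrightarrow> P (- x) = - P x"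
  using clinear_scaleC[of P "-1" x] by (simp only: minus_scaleC[symmetric])
lemma clinear_diff: "clinear (P::'a::complex_inner\<Rightarrow>'b::complex_inner) \<Longrightarrow> P (x - y) = P x - P y"
  using clinear_add[of P x "-y"] clinear_minus[of P y] by (simp only: diff_conv_add_uminus)

lemma orth_proj_idem: "orth_proj P \<Longrightarrow> P (P x) = P x"
proof -
  assume "orth_proj P" then have "P \<circ> P = P" by (simp add: orth_proj_def)
  from fun_cong[OF this, of x] show ?thesis by simp
qed  
lemma orth_proj_sa: "orth_proj P \<Longrightarrow> cinner (P x) y = cinner x (P y)"
  unfolding orth_proj_def by blast
lemma orth_proj_clinear: "orth_proj P \<Longrightarrow> clinear P"
  unfolding orth_proj_def by blast
lemma orth_proj_cinner: "orth_proj P \<Longrightarrow> cinner x (P x) = complex_of_real ((norm (P x))^2)"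
  using orth_proj_sa[of P x "P x"] orth_proj_idem[of P x] cinner_self[of "P x"] by simp

lemma orth_proj_norm: "orth_proj (P::'a::complex_inner\<Rightarrow>'a) \<Longrightarrow> norm (P x) \<le> norm x"
proof -
  assume P: "orth_proj P"
  have "(norm (P x))^2 = cmod (cinner x (P x))" using orth_proj_cinner[OF P, of x] by (simp add: norm_power)
  also have "\<dots> \<le> norm x * norm (P x)" by (rule cauchy_schwarz)
  finally have "norm (P x) * norm (P x) \<le> norm x * norm (P x)" by (simp add: power2_eq_square)
  then show ?thesis
  proof (cases "norm (P x) = 0")
    case True then show ?thesis by simp
  next
    case False then have "norm (P x) > 0" by simp
    with \<open>norm (P x) * norm (P x) \<le> norm x * norm (P x)\<close> show ?thesis by (rule mult_right_le_imp_le)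
  qed
qed

lemma orth_proj_bounded_linear: "orth_proj (P::'a::complex_inner\<Rightarrow>'a) \<Longrightarrow> bounded_linear P"
proof -
  assume P: "orth_proj P"
  have L: "clinear P" using P by (rule orth_proj_clinear)
  show ?thesis
  proof (rule bounded_linear_intro[where K=1])
    fix x y show "P (x + y) = P x + P y" using L by (rule clinear_add)
  next
    fix r x
    have "P (r *\<^sub>R x) = P (complex_of_real r *\<^sub>C x)" by (simp only: scaleR_scaleC)
    also have "\<dots> = complex_of_real r *\<^sub>C P x" using L by (rule clinear_scaleC)
    also have "\<dots> = r *\<^sub>R P x" by (simp only: scaleR_scaleC)
    finally show "P (r *\<^sub>R x) = r *\<^sub>R P x" .
  next
    fix x show "norm (P x) \<le> norm x * 1" using orth_proj_norm[OF P] by simp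
  qed
qed

lemma cinner_cnj_self: "cinner (x::'a::complex_inner) y * cinner y x = complex_of_real ((cmod (cinner x y))^2)"
  using complex_norm_square[of "cinner x y"] cinner_commute[of y x] by simp

lemma channel_term:
  assumes "clinear X"
  shows "(rank1 (u k) (v k) \<circ> X \<circ> rank1 (v k) (u k)) x
       = (cinner (u k) x * cinner (v k) (X (v k))) *\<^sub>C (u k :: 'a::complex_inner)"
  by (simp add: rank1_def clinear_scaleC[OF assms] cinner_scaleC_right)

lemma channel_sums:
  fixes u v :: "nat \<Rightarrow> 'a::chilbert_space"
  assumes X: "clinear X" and u: "\<forall>k. norm (u k) = 1"
    and s: "summable (\<lambda>k. norm (cinner (v k) (X (v k))))"
  shows "(\<lambda>k. (cinner (u k) x * cinner (v k) (X (v k))) *\<^sub>C u k) sums channel u v X x"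
proof -
  have sm: "summable (\<lambda>k. (cinner (u k) x * cinner (v k) (X (v k))) *\<^sub>C u k)"
  proof (rule summable_comparison_test[OF _ summable_mult[OF s, of "norm x"]])
    show "\<exists>N. \<forall>n\<ge>N. norm ((cinner (u n) x * cinner (v n) (X (v n))) *\<^sub>C u n) \<le> norm x * norm (cinner (v n) (X (v n)))"
    proof (intro exI allI impI)
      fix n
      have "norm ((cinner (u n) x * cinner (v n) (X (v n))) *\<^sub>C u n)
          = cmod (cinner (u n) x) * cmod (cinner (v n) (X (v n)))"
        using u by (simp add: norm_scaleC norm_mult)
      also have "\<dots> \<le> norm x * cmod (cinner (v n) (X (v n)))"
        using cauchy_schwarz[of "u n" x] u by (simp add: mult_right_mono)
      finally show "norm ((cinner (u n) x * cinner (v n) (X (v n))) *\<^sub>C u n) \<le> norm x * norm (cinner (v n) (X (v n)))" by simp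
    qed
  qed
  have "channel u v X x = (\<Sum>k. (cinner (u k) x * cinner (v k) (X (v k))) *\<^sub>C u k)"
    unfolding channel_def by (simp only: channel_term[OF X])
  then show ?thesis using sm by (simp add: summable_sums)
qed

lemma parseval:
  fixes v :: "nat \<Rightarrow> 'a::complex_inner"
  assumes pv: "\<forall>x. (\<lambda>k. rank1 (v k) (v k) x) sums x"
  shows "(\<lambda>k. (cmod (cinner (v k) a))^2) sums (norm a)^2"
proof -
  have "(\<lambda>k. cinner a (cinner (v k) a *\<^sub>C v k)) sums cinner a a"
    using sums_cinner[OF pv[rule_format, of a, unfolded rank1_def]] .
  then have "(\<lambda>k. complex_of_real ((cmod (cinner (v k) a))^2)) sums complex_of_real ((norm a)^2)"
    by (simp add: cinner_scaleC_right cinner_cnj_self cinner_self)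
  from sums_Re[OF this] show ?thesis by simp
qed

lemma parseval_partial:
  fixes v :: "nat \<Rightarrow> 'a::complex_inner"
  assumes pv: "\<forall>x. (\<lambda>k. rank1 (v k) (v k) x) sums x" and "finite A"
  shows "(\<Sum>k\<in>A. (cmod (cinner (v k) a))^2) \<le> (norm a)^2"
proof -
  have "(\<Sum>k\<in>A. (cmod (cinner (v k) a))^2) \<le> (\<Sum>k. (cmod (cinner (v k) a))^2)"
    using parseval[OF pv, of a] assms(2) by (intro sum_le_suminf) (auto simp: sums_iff)
  then show ?thesis using parseval[OF pv, of a] by (simp add: sums_iff)
qed

lemma finite_cs:
  fixes v :: "nat \<Rightarrow> 'a::complex_inner"
  assumes pv: "\<forall>x. (\<lambda>k. rank1 (v k) (v k) x) sums x" and A: "finite A"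
  shows "(\<Sum>k\<in>A. cmod (cinner b (v k)) * cmod (cinner (v k) a)) \<le> norm a * norm b"
proof -
  have "(\<Sum>k\<in>A. cmod (cinner b (v k)) * cmod (cinner (v k) a))
      = (\<Sum>k\<in>A. \<bar>cmod (cinner (v k) b)\<bar> * \<bar>cmod (cinner (v k) a)\<bar>)"
    by (intro sum.cong refl) (simp add: cinner_commute[of b "v k" for k])
  also have "\<dots> \<le> L2_set (\<lambda>k. cmod (cinner (v k) b)) A * L2_set (\<lambda>k. cmod (cinner (v k) a)) A"
    by (rule L2_set_mult_ineq)
  also have "\<dots> \<le> norm b * norm a"
  proof (rule mult_mono)
    show "L2_set (\<lambda>k. cmod (cinner (v k) b)) A \<le> norm b"
      unfolding L2_set_def using real_sqrt_le_mono[OF parseval_partial[OF pv A, of b]] by simp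
    show "L2_set (\<lambda>k. cmod (cinner (v k) a)) A \<le> norm a"
      unfolding L2_set_def using real_sqrt_le_mono[OF parseval_partial[OF pv A, of a]] by simp
  qed (auto simp: L2_set_def intro!: sum_nonneg)
  finally show ?thesis by (simp add: mult.commute)
qed

lemma trace_bound:
  fixes v :: "nat \<Rightarrow> 'a::complex_inner"
  assumes pv: "\<forall>x. (\<lambda>k. rank1 (v k) (v k) x) sums x"
    and P: "orth_proj P" and tc: "trace_class P"
  shows "summable (\<lambda>k. (norm (P (v k)))^2)"
proof -
  obtain a b :: "nat \<Rightarrow> 'a" where ab: "summable (\<lambda>n. norm (a n) * norm (b n))"
    and Pab: "\<forall>x. (\<lambda>n. cinner (b n) x *\<^sub>C a n) sums P x"
    using tc unfolding trace_class_def by blast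
  define M where "M = (\<Sum>n. norm (a n) * norm (b n))"
  show ?thesis
  proof (rule bounded_imp_summable)
    fix N
    define t where "t = (\<lambda>n k. cinner (b n) (v k) * cinner (v k) (a n))"
    define s where "s = (\<lambda>n. \<Sum>k\<le>N. t n k)"
    have tk: "(\<lambda>n. t n k) sums complex_of_real ((norm (P (v k)))^2)" for k
    proof -
      have "(\<lambda>n. cinner (v k) (cinner (b n) (v k) *\<^sub>C a n)) sums cinner (v k) (P (v k))"
        using sums_cinner[OF Pab[rule_format, of "v k"]] .
      then show ?thesis by (simp add: t_def cinner_scaleC_right orth_proj_cinner[OF P])
    qed
    have ss: "s sums complex_of_real (\<Sum>k\<le>N. (norm (P (v k)))^2)"
      unfolding s_def of_real_sum by (rule sums_sum) (rule tk)
    have sn: "norm (s n) \<le> norm (a n) * norm (b n)" for n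
    proof -
      have "norm (s n) \<le> (\<Sum>k\<le>N. norm (t n k))" unfolding s_def by (rule norm_sum)
      also have "\<dots> = (\<Sum>k\<le>N. cmod (cinner (b n) (v k)) * cmod (cinner (v k) (a n)))"
        by (simp add: t_def norm_mult)
      also have "\<dots> \<le> norm (a n) * norm (b n)" by (rule finite_cs[OF pv]) simp
      finally show ?thesis .
    qed
    have sum_s: "summable (\<lambda>n. norm (s n))"
      by (rule summable_comparison_test[OF _ ab]) (use sn in auto)
    have "(\<Sum>k\<le>N. (norm (P (v k)))^2) = norm (complex_of_real (\<Sum>k\<le>N. (norm (P (v k)))^2))"
      using abs_of_nonneg[OF sum_nonneg[of "{..N}" "\<lambda>k. (norm (P (v k)))^2"]]
      by (simp only: norm_of_real) simp
    also have "\<dots> = norm (suminf s)" using ss by (simp add: sums_iff)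
    also have "\<dots> \<le> (\<Sum>n. norm (s n))" by (rule summable_norm[OF sum_s])
    also have "\<dots> \<le> M" unfolding M_def by (rule suminf_le[OF sn sum_s ab])
    finally show "(\<Sum>k\<le>N. (norm (P (v k)))^2) \<le> M" .
  qed simp
qed

lemma rank1_clinear: "clinear (rank1 (y::'a::complex_inner) z)"
  by (simp add: clinear_def rank1_def cinner_add_right scaleC_add_left cinner_scaleC_right scaleC_scaleC)

lemma rank1_trace_class: "trace_class (rank1 (y::'a::complex_inner) z)"
  unfolding trace_class_def
proof (intro exI conjI allI)
  let ?a = "\<lambda>n::nat. if n = 0 then y else 0" and ?b = "\<lambda>n::nat. if n = 0 then z else 0"
  have "(\<lambda>n. norm (?a n) * norm (?b n)) = (\<lambda>n. if n = 0 then norm y * norm z else 0)" by auto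
  then show "summable (\<lambda>n. norm (?a n) * norm (?b n))" by (simp add: summable_If_finite_set)
  fix x
  have "(\<lambda>n. cinner (?b n) x *\<^sub>C ?a n) = (\<lambda>n. if n = 0 then cinner z x *\<^sub>C y else 0)" by auto
  then show "(\<lambda>n. cinner (?b n) x *\<^sub>C ?a n) sums rank1 y z x"
    using sums_single[of 0 "\<lambda>_. cinner z x *\<^sub>C y"] by (simp add: rank1_def)
qed

lemma nonneg_zero:
  fixes u :: "nat \<Rightarrow> 'a::complex_inner"
  assumes s: "(\<lambda>k. (cinner (u k) x * complex_of_real (f k)) *\<^sub>C u k) sums w"
    and z: "cinner x w = 0" and f: "\<forall>k. f k \<ge> 0"
  shows "f k * (cmod (cinner (u k) x))^2 = 0"
proof -
  have "(\<lambda>k. cinner x ((cinner (u k) x * complex_of_real (f k)) *\<^sub>C u k)) sums 0"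
    using sums_cinner[OF s, of x] z by simp
  moreover have "cinner x ((cinner (u k) x * complex_of_real (f k)) *\<^sub>C u k)
     = complex_of_real (f k * (cmod (cinner (u k) x))^2)" for k
    using cinner_cnj_self[of "u k" x]
    by (simp add: cinner_scaleC_right algebra_simps)
  ultimately have "(\<lambda>k. complex_of_real (f k * (cmod (cinner (u k) x))^2)) sums 0" by simp
  from sums_Re[OF this] have r: "(\<lambda>k. f k * (cmod (cinner (u k) x))^2) sums 0" by simp
  have "suminf (\<lambda>k. f k * (cmod (cinner (u k) x))^2) = 0" using r by (simp add: sums_iff)
  then have "\<forall>k. f k * (cmod (cinner (u k) x))^2 = 0"
    using suminf_eq_zero_iff[of "\<lambda>k. f k * (cmod (cinner (u k) x))^2"] r f
    by (simp add: sums_iff)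
  then show ?thesis by blast
qed

lemma channel_zero: "channel u v (\<lambda>x. 0) = (\<lambda>x. (0::'a::complex_inner))"
  by (simp add: channel_def rank1_def comp_def)

lemma eig:
  fixes u v :: "nat \<Rightarrow> 'a::chilbert_space"
  assumes u: "\<forall>k. norm (u k) = 1"
    and pv: "\<forall>x. (\<lambda>k. rank1 (v k) (v k) x) sums x"
    and P: "orth_proj P" and M: "P \<in> mult_domain (channel u v)"
    and nz: "v k0 \<noteq> 0"
  shows "is_eigenvector P (v k0)"
proof -
  have L: "clinear P" using P by (rule orth_proj_clinear)
  have tc: "trace_class P" and mul: "\<And>X. trace_class X \<Longrightarrow> channel u v (P \<circ> X) = channel u v P \<circ> channel u v X"
    using M unfolding mult_domain_def by auto
  define c where "c = (\<lambda>k. (norm (P (v k)))^2)"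
  have c_sum: "summable c" unfolding c_def by (rule trace_bound[OF pv P tc])
  have cP: "cinner (v k) (P (v k)) = complex_of_real (c k)" for k
    by (simp add: c_def orth_proj_cinner[OF P])
  have cn: "c k \<ge> 0" for k by (simp add: c_def)
  have nc: "(\<lambda>k. norm (cinner (v k) (P (v k)))) = c" by (rule ext) (simp add: cP cn)
  have chP: "(\<lambda>k. (cinner (u k) x * complex_of_real (c k)) *\<^sub>C u k) sums channel u v P x" for x
    using channel_sums[OF L u, of v x] c_sum nc by (simp add: cP)
  show ?thesis
  proof (cases "P (v k0) = 0")
    case True
    then show ?thesis using nz unfolding is_eigenvector_def by (intro conjI exI[of _ 0]) simp_all
  next
    case False
    then have c0: "c k0 > 0" by (simp add: c_def)
    have perp: "cinner (v k0) y = 0" if Py: "P y = 0" for y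
    proof -
      define Y where "Y = rank1 y y"
      define d where "d = (\<lambda>k. (cmod (cinner (v k) y))^2)"
      have LY: "clinear Y" unfolding Y_def by (rule rank1_clinear)
      have dY: "cinner (v k) (Y (v k)) = complex_of_real (d k)" for k
        unfolding Y_def d_def rank1_def using cinner_cnj_self[of "v k" y]
        by (simp add: cinner_scaleC_right mult.commute)
      have d_sum: "summable d" unfolding d_def using parseval[OF pv, of y] by (simp add: sums_iff)
      have dn: "d k \<ge> 0" for k by (simp add: d_def)
      have nd: "(\<lambda>k. norm (cinner (v k) (Y (v k)))) = d" by (rule ext) (simp add: dY dn)
      have chY: "(\<lambda>k. (cinner (u k) x * complex_of_real (d k)) *\<^sub>C u k) sums channel u v Y x" for x
        using channel_sums[OF LY u, of v x] d_sum nd by (simp add: dY)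
      have PY: "P \<circ> Y = (\<lambda>x. 0)"
        by (rule ext) (simp add: Y_def rank1_def clinear_scaleC[OF L] Py)
      have "channel u v P \<circ> channel u v Y = (\<lambda>x. 0)"
        using mul[of Y] rank1_trace_class[of y y] PY channel_zero[of u v]
        by (simp add: Y_def)
      then have z0: "channel u v P (channel u v Y w) = 0" for w
        by (metis comp_apply)
      define z where "z = channel u v Y (u k0)"
      have "c k0 * (cmod (cinner (u k0) z))^2 = 0"
        by (rule nonneg_zero[OF chP[of z]]) (auto simp: z0 z_def c_def)
      with c0 have uz: "cinner (u k0) z = 0" by simp
      have "d k0 * (cmod (cinner (u k0) (u k0)))^2 = 0"
        by (rule nonneg_zero[OF chY[of "u k0"]]) (auto simp: uz[unfolded z_def] d_def)
      moreover have "cinner (u k0) (u k0) = 1" using u by (simp add: cinner_self)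
      ultimately have "d k0 = 0" by simp
      then show ?thesis by (simp add: d_def)
    qed
    define w where "w = v k0 - P (v k0)"
    have Pw: "P w = 0" by (simp add: w_def clinear_diff[OF L] orth_proj_idem[OF P])
    have "cinner w w = cinner (v k0) w - cinner (P (v k0)) w"
      by (simp add: w_def cinner_diff_left)
    also have "\<dots> = 0" using perp[OF Pw] by (simp add: orth_proj_sa[OF P] Pw)
    finally have "w = 0" by (simp add: cinner_self_eq_0)
    then have "P (v k0) = 1 *\<^sub>C v k0" by (simp add: w_def scaleC_one)
    then show ?thesis using nz unfolding is_eigenvector_def by blast
  qed
qed

lemma commute_on_v:
  fixes P Q :: "'a::complex_inner \<Rightarrow> 'a"
  assumes LP: "clinear P" and LQ: "clinear Q"
    and eP: "x \<noteq> 0 \<Longrightarrow> is_eigenvector P x" and eQ: "x \<noteq> 0 \<Longrightarrow> is_eigenvector Q x"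
  shows "P (Q x) = Q (P x)"
proof (cases "x = 0")
  case True then show ?thesis by (simp add: clinear_zero LP LQ)
next
  case False
  then obtain a b where a: "P x = a *\<^sub>C x" and b: "Q x = b *\<^sub>C x"
    using eP eQ unfolding is_eigenvector_def by blast
  show ?thesis by (simp add: a b clinear_scaleC[OF LP] clinear_scaleC[OF LQ] scaleC_scaleC mult.commute)
qed

theorem proposition3p4:
  fixes u v :: "nat \<Rightarrow> 'a::chilbert_space"
  assumes "separable_type TYPE('a)"
    and "infinite_dimensional TYPE('a)"
    and "\<forall>k. norm (u k) = 1"
    and "\<forall>x. (\<lambda>k. rank1 (v k) (v k) x) sums x"
  shows "(\<forall>P. orth_proj P \<and> P \<in> mult_domain (channel u v) \<longrightarrow>
            (\<forall>k. v k \<noteq> 0 \<longrightarrow> is_eigenvector P (v k)))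
       \<and> (\<forall>P Q. orth_proj P \<and> orth_proj Q \<and> P \<in> mult_domain (channel u v)
            \<and> Q \<in> mult_domain (channel u v) \<longrightarrow> P \<circ> Q = Q \<circ> P)"
proof (intro conjI allI impI)
  fix P k assume "orth_proj P \<and> P \<in> mult_domain (channel u v)" "v k \<noteq> 0"
  then show "is_eigenvector P (v k)" using eig[OF assms(3) assms(4)] by blast
next
  fix P Q assume H: "orth_proj P \<and> orth_proj Q \<and> P \<in> mult_domain (channel u v)
            \<and> Q \<in> mult_domain (channel u v)"
  then have P: "orth_proj P" and Q: "orth_proj Q" by auto
  have comm: "P (Q (v k)) = Q (P (v k))" for k
    using commute_on_v[OF orth_proj_clinear[OF P] orth_proj_clinear[OF Q]]
      eig[OF assms(3) assms(4)] H by blast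
  show "P \<circ> Q = Q \<circ> P"
  proof (rule ext)
    fix x
    have s: "(\<lambda>k. cinner (v k) x *\<^sub>C v k) sums x" using assms(4) by (simp add: rank1_def)
    have trm: "R (a *\<^sub>C y) = a *\<^sub>C R y" if "orth_proj R" for R a y
      using clinear_scaleC[OF orth_proj_clinear[OF that]] .
    have s1: "(\<lambda>k. cinner (v k) x *\<^sub>C P (Q (v k))) sums P (Q x)"
      using bounded_linear.sums[OF orth_proj_bounded_linear[OF P],
          OF bounded_linear.sums[OF orth_proj_bounded_linear[OF Q], OF s]]
      by (simp add: trm[OF P] trm[OF Q])
    have s2: "(\<lambda>k. cinner (v k) x *\<^sub>C Q (P (v k))) sums Q (P x)"
      using bounded_linear.sums[OF orth_proj_bounded_linear[OF Q],
          OF bounded_linear.sums[OF orth_proj_bounded_linear[OF P], OF s]]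
      by (simp add: trm[OF P] trm[OF Q])
    from s1 s2 show "(P \<circ> Q) x = (Q \<circ> P) x" by (simp add: comm sums_unique2)
  qed
qed

end
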